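(* Let $M\in\mathbb N$, let $X(M)$ be the subshift defined below and let $E$ be its code defined below. Then the generating function $f(E,z)=\sum_{u\in E}z^{|u|}$ equals $\frac12\left(1-\sqrt{1-8Mz^2}\right)$.
   Context: Let $\Sigma_1=\{\lambda,\xi,\rho_1,\dots,\rho_M,\eta_1,\dots,\eta_M\}$. $\mathcal M_1(M)$ is the monoid with zero generated by $\Sigma_1$ and an identity $\mathbf 1$, subject only to the relations $\lambda\rho_i=\mathbf 1$, $\lambda\eta_i=0$, $\xi\eta_i=\mathbf 1$, $\xi\rho_i=0$ ($1\le i\le M$), $\mathbf 1$ is the identity and $0$ is absorbing; no other relations. $\mathit{red}:\Sigma_1^*\to\mathcal M_1(M)$ sends a word to the product of its letters (empty word to $\mathbf 1$). $X(M)=\{x\in\Sigma_1^{\mathbb Z}:\mathit{red}(x_i\cdots x_j)\neq 0\ \forall i\le j\}$. The code $E$ is the set of blocks $w$ of $X(M)$ of the form $w=avb$ with $a\in\{\lambda,\xi\}$, $b\in\{\rho_1,\dots,\rho_M,\eta_1,\dots,\eta_M\}$, $\mathit{red}(ab)=\mathbf 1$, and $v$ a word with $\mathit{red}(v)=\mathbf 1$. $|u|$ is the length of $u$; the generating function is a formal power series. *)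

theory Defs
  imports "HOL-Computational_Algebra.Formal_Power_Series"
begin

datatype letter = Lam | Xi | Rho nat | Eta nat

definition Sigma1 :: "nat \<Rightarrow> letter set" where
  "Sigma1 M = {Lam, Xi} \<union> Rho ` {1..M} \<union> Eta ` {1..M}"

fun is_open :: "letter \<Rightarrow> bool" where
  "is_open Lam = True" | "is_open Xi = True" | "is_open _ = False"

fun is_close :: "letter \<Rightarrow> bool" where
  "is_close (Rho _) = True" | "is_close (Eta _) = True" | "is_close _ = False"

fun matches :: "letter \<Rightarrow> letter \<Rightarrow> bool" where
  "matches Lam (Rho _) = True" | "matches Xi (Eta _) = True" | "matches _ _ = False"

text \<open>Elements of the monoid with zero M_1(M) are represented by normal forms:
  None is the zero, Some s is the reduced word (stored reversed, as a stack);
  Some [] is the identity. Appending a letter to a normal form applies the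
  defining relations lambda rho_i = 1, xi eta_i = 1, lambda eta_i = 0, xi rho_i = 0.\<close>
fun step :: "letter list option \<Rightarrow> letter \<Rightarrow> letter list option" where
  "step None _ = None"
| "step (Some []) b = Some [b]"
| "step (Some (a # s)) b =
     (if is_open a \<and> is_close b then (if matches a b then Some s else None)
      else Some (b # a # s))"

definition red :: "letter list \<Rightarrow> letter list option" where
  "red w = foldl step (Some []) w"

abbreviation zero_M :: "letter list option" where "zero_M \<equiv> None"
abbreviation one_M :: "letter list option" where "one_M \<equiv> Some []"

definition XM :: "nat \<Rightarrow> (int \<Rightarrow> letter) set" where
  "XM M = {x. (\<forall>i. x i \<in> Sigma1 M) \<and>
              (\<forall>i j. i \<le> j \<longrightarrow> red (map x [i..j]) \<noteq> zero_M)}"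

definition blocks :: "nat \<Rightarrow> letter list set" where
  "blocks M = {w. \<exists>x \<in> XM M. \<exists>i::int. w = map (\<lambda>k. x (i + int k)) [0..<length w]}"

definition codeE :: "nat \<Rightarrow> letter list set" where
  "codeE M = {w \<in> blocks M. \<exists>a v b. w = a # v @ [b] \<and> a \<in> {Lam, Xi} \<and>
       b \<in> Rho ` {1..M} \<union> Eta ` {1..M} \<and> red [a, b] = one_M \<and> red v = one_M}"

definition genfun :: "letter list set \<Rightarrow> real fps" where
  "genfun E = Abs_fps (\<lambda>n. of_nat (card {u \<in> E. length u = n}))"

end

theory Submission
  imports Defs
begin


lemma foldl_None[simp]: "foldl step None v = None"
  by (induction v) auto

lemma open_not_close: "is_open a \<Longrightarrow> \<not> is_close a"
  by (cases a) auto

lemma matches_oc: "matches a b \<Longrightarrow> is_open a \<and> is_close b"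
  by (cases a; cases b) auto

lemma step_open: "is_open a \<Longrightarrow> step (Some s) a = Some (a # s)"
  by (cases s) (auto simp: open_not_close)

lemma step_app: "t \<noteq> [] \<Longrightarrow> step (Some (t @ s)) c = map_option (\<lambda>x. x @ s) (step (Some t) c)"
  by (cases t) auto

lemma step_app_closer: "\<not> is_open c \<Longrightarrow> step (Some (t @ [c])) d = map_option (\<lambda>x. x @ [c]) (step (Some t) d)"
  by (cases t) auto

lemma foldl_closer: "\<not> is_open c \<Longrightarrow>
   foldl step (Some (t @ [c])) v = map_option (\<lambda>x. x @ [c]) (foldl step (Some t) v)"
proof (induction v arbitrary: t)
  case Nil then show ?case by simp
next
  case (Cons d v)
  show ?case
  proof (cases "step (Some t) d")
    case None then show ?thesis using step_app_closer[OF Cons.prems, of t d] by simp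
  next
    case (Some t1) then show ?thesis using step_app_closer[OF Cons.prems, of t d] Cons by simp
  qed
qed

lemma factor_aux: "foldl step (Some t) v = None \<Longrightarrow> foldl step (Some (t @ s)) v = None"
proof (induction v arbitrary: t s)
  case Nil then show ?case by simp
next
  case (Cons c v)
  show ?case
  proof (cases "t = []")
    case False
    show ?thesis
    proof (cases "step (Some t) c")
      case None then show ?thesis using step_app[OF False, of s c] by simp
    next
      case (Some t1) then show ?thesis using step_app[OF False, of s c] Cons by simp
    qed
  next
    case True
    then have h: "foldl step (Some [c]) v = None" using Cons.prems by simp
    show ?thesis
    proof (cases s)
      case Nil then show ?thesis using Cons.prems True by simp
    next
      case (Cons a s0)
      show ?thesis
      proof (cases "is_open a \<and> is_close c")
        case oc: True
        show ?thesis
        proof (cases "matches a c")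
          case True
          have "\<not> is_open c" using oc open_not_close by blast
          then have "foldl step (Some []) v = None" using h foldl_closer[of c "[]" v] by simp
          then have "foldl step (Some ([] @ s0)) v = None" using Cons.IH by blast
          then show ?thesis using True oc \<open>t = []\<close> \<open>s = a # s0\<close> by simp
        next
          case False then show ?thesis using oc \<open>t = []\<close> \<open>s = a # s0\<close> by auto
        qed
      next
        case False
        have "foldl step (Some ([c] @ s)) v = None" using Cons.IH h by blast
        then show ?thesis using False \<open>t = []\<close> \<open>s = a # s0\<close> by auto
      qed
    qed
  qed
qed

lemma factor_None: "red v = None \<Longrightarrow> red (u @ v @ w) = None"
proof -
  assume a: "red v = None"
  show ?thesis
  proof (cases "red u")
    case None then show ?thesis by (simp add: red_def)
  next
    case (Some s)
    have "foldl step (Some ([] @ s)) v = None" using factor_aux[of "[]" v s] a by (simp add: red_def)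
    then show ?thesis using Some by (simp add: red_def)
  qed
qed

inductive pd :: "letter list \<Rightarrow> letter list \<Rightarrow> bool" where
  pd_nil: "pd [] []"
| pd_push: "pd s v \<Longrightarrow> is_open a \<Longrightarrow> pd (a # s) (v @ [a])"
| pd_pop: "pd (a # s) v \<Longrightarrow> matches a b \<Longrightarrow> pd s (v @ [b])"

lemma pd_run: "pd s v \<Longrightarrow> foldl step (Some r) v = Some (s @ r)"
proof (induction rule: pd.induct)
  case pd_nil then show ?case by simp
next
  case (pd_push s v a) then show ?case by (simp add: step_open)
next
  case (pd_pop a s v b) then show ?case using matches_oc[OF pd_pop.hyps(2)] by simp
qed

lemma red_pd: "foldl step (Some []) v = Some s \<Longrightarrow> \<forall>x\<in>set s. is_open x \<Longrightarrow> pd s v"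
proof (induction v arbitrary: s rule: rev_induct)
  case Nil then show ?case by (simp add: pd_nil)
next
  case (snoc c v)
  show ?case
  proof (cases "foldl step (Some []) v")
    case None then show ?thesis using snoc.prems by simp
  next
    case (Some s')
    show ?thesis
    proof (cases s')
      case Nil
      then have "s = [c]" using snoc.prems Some by simp
      then show ?thesis using snoc Some Nil pd_push[of "[]" v c] by simp
    next
      case (Cons a s0)
      show ?thesis
      proof (cases "is_open a \<and> is_close c")
        case oc: True
        show ?thesis
        proof (cases "matches a c")
          case True
          then have "s = s0" using snoc.prems Some Cons oc by simp
          then have "pd (a # s0) v" using snoc Some Cons oc by simp
          then show ?thesis using pd_pop True \<open>s = s0\<close> by blast
        next
          case False then show ?thesis using snoc.prems Some Cons oc by simp
        qed
      next
        case False
        then have "s = c # a # s0" using snoc.prems Some Cons by auto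
        then have "pd (a # s0) v" using snoc Some Cons by simp
        then show ?thesis using pd_push \<open>s = c # a # s0\<close> snoc.prems by simp
      qed
    qed
  qed
qed

lemma closer_persist_step: "c \<in> set s \<Longrightarrow> \<not> is_open c \<Longrightarrow> step (Some s) d = Some s' \<Longrightarrow> c \<in> set s'"
  by (cases s) (auto split: if_splits)

lemma closer_persist: "c \<in> set s \<Longrightarrow> \<not> is_open c \<Longrightarrow> foldl step (Some s) v = Some s' \<Longrightarrow> c \<in> set s'"
proof (induction v arbitrary: s)
  case Nil then show ?case by simp
next
  case (Cons d v)
  show ?case
  proof (cases "step (Some s) d")
    case None then show ?thesis using Cons.prems by simp
  next
    case (Some s1)
    then have "c \<in> set s1" using closer_persist_step Cons.prems by blast
    then show ?thesis using Cons.IH[of s1] Cons.prems Some by simp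
  qed
qed

lemma prefix_pd: "red (v @ z) = Some [] \<Longrightarrow> \<exists>s. red v = Some s \<and> pd s v"
proof -
  assume a: "red (v @ z) = Some []"
  obtain s where s: "red v = Some s"
    using a by (cases "red v") (auto simp: red_def)
  have "\<forall>x\<in>set s. is_open x"
  proof
    fix x assume "x \<in> set s"
    show "is_open x"
    proof (rule ccontr)
      assume "\<not> is_open x"
      have "foldl step (Some s) z = Some []" using a s by (simp add: red_def)
      then show False using closer_persist[OF \<open>x \<in> set s\<close> \<open>\<not> is_open x\<close>] by fastforce
    qed
  qed
  then show ?thesis using s red_pd by (auto simp: red_def)
qed

lemma decomp_aux: "pd s v \<Longrightarrow> \<forall>t. s = t @ [a] \<longrightarrow> (\<exists>u v'. v = u @ a # v' \<and> pd [] u \<and> pd t v')"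
proof (induction rule: pd.induct)
  case pd_nil then show ?case by simp
next
  case (pd_push s v c)
  show ?case
  proof (intro allI impI)
    fix t assume t: "c # s = t @ [a]"
    show "\<exists>u v'. v @ [c] = u @ a # v' \<and> pd [] u \<and> pd t v'"
    proof (cases t)
      case Nil
      then have "s = []" "c = a" using t by auto
      then show ?thesis using pd_push Nil pd_nil by fastforce
    next
      case (Cons c' t')
      then have "s = t' @ [a]" "c = c'" using t by auto
      then obtain u v' where "v = u @ a # v'" "pd [] u" "pd t' v'" using pd_push by blast
      then show ?thesis using Cons \<open>c = c'\<close> pd.pd_push[OF \<open>pd t' v'\<close> pd_push.hyps(2)] by fastforce
    qed
  qed
next
  case (pd_pop c s v b)
  show ?case
  proof (intro allI impI)
    fix t assume t: "s = t @ [a]"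
    then obtain u v' where "v = u @ a # v'" "pd [] u" "pd (c # t) v'" using pd_pop.IH by fastforce
    then show "\<exists>u v'. v @ [b] = u @ a # v' \<and> pd [] u \<and> pd t v'"
      using pd.pd_pop[OF \<open>pd (c # t) v'\<close> pd_pop.hyps(2)] by fastforce
  qed
qed

lemma decomp: "pd (t @ [a]) v \<Longrightarrow> \<exists>u v'. v = u @ a # v' \<and> pd [] u \<and> pd t v'"
  using decomp_aux by blast



definition Pairs :: "nat \<Rightarrow> (letter \<times> letter) set" where
  "Pairs M = (\<lambda>i. (Lam, Rho i)) ` {1..M} \<union> (\<lambda>i. (Xi, Eta i)) ` {1..M}"
definition Dy :: "nat \<Rightarrow> letter list set" where
  "Dy M = {v. set v \<subseteq> Sigma1 M \<and> red v = Some []}"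
definition Ef :: "nat \<Rightarrow> letter list set" where
  "Ef M = {a # v @ [b] | a b v. (a, b) \<in> Pairs M \<and> v \<in> Dy M}"

lemma Pairs_matches: "(a, b) \<in> Pairs M \<Longrightarrow> matches a b \<and> a \<in> Sigma1 M \<and> b \<in> Sigma1 M"
  by (auto simp: Pairs_def Sigma1_def)

lemma dyck_fix: "red v = Some [] \<Longrightarrow> foldl step (Some r) v = Some r"
  using red_pd[of v "[]"] pd_run[of "[]" v r] by (simp add: red_def)

lemma Ef_red: "w \<in> Ef M \<Longrightarrow> red w = Some [] \<and> set w \<subseteq> Sigma1 M"
proof -
  assume "w \<in> Ef M"
  then obtain a b v where w: "w = a # v @ [b]" "(a, b) \<in> Pairs M" "v \<in> Dy M"
    unfolding Ef_def by blast
  have m: "matches a b" "a \<in> Sigma1 M" "b \<in> Sigma1 M" using Pairs_matches[OF w(2)] by auto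
  have "foldl step (Some [a]) v = Some [a]" using dyck_fix w(3) by (simp add: Dy_def)
  then have "red w = Some []" using w(1) matches_oc[OF m(1)] m(1) by (simp add: red_def)
  then show ?thesis using w m by (auto simp: Dy_def)
qed

lemma Ef_prime: "w \<in> Ef M \<Longrightarrow> w = x @ y \<Longrightarrow> x \<noteq> [] \<Longrightarrow> y \<noteq> [] \<Longrightarrow> red x \<noteq> Some []"
proof -
  assume "w \<in> Ef M" and wxy: "w = x @ y" and x: "x \<noteq> []" and y: "y \<noteq> []"
  then obtain a b v where w: "w = a # v @ [b]" "(a, b) \<in> Pairs M" "v \<in> Dy M"
    unfolding Ef_def by blast
  obtain v' where x': "x = a # v'" using x wxy w(1) by (cases x) auto
  have "v @ [b] = v' @ y" using x' wxy w(1) by simp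
  then obtain us where "(v = v' @ us \<and> us @ [b] = y) \<or> (v @ us = v' \<and> [b] = us @ y)"
    by (auto simp: append_eq_append_conv2)
  then obtain z where "v = v' @ z"
  proof
    assume "v @ us = v' \<and> [b] = us @ y"
    then have "us = []" using y by (cases us) auto
    then show ?thesis using \<open>v @ us = v' \<and> [b] = us @ y\<close> that[of "[]"] by simp
  qed blast
  then have "red (v' @ z) = Some []" using w(3) by (simp add: Dy_def)
  then obtain s where s: "red v' = Some s" "pd s v'" using prefix_pd by blast
  have "red x = foldl step (Some [a]) v'" using x' by (simp add: red_def)
  also have "\<dots> = Some (s @ [a])" using pd_run[OF s(2)] by simp
  finally show ?thesis by simp
qed

lemma last_return: "w \<in> Dy M \<Longrightarrow> w \<noteq> [] \<Longrightarrow> \<exists>u e. w = u @ e \<and> u \<in> Dy M \<and> e \<in> Ef M"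
proof -
  assume wD: "w \<in> Dy M" and ne: "w \<noteq> []"
  have "pd [] w" using red_pd[of w "[]"] wD by (simp add: Dy_def red_def)
  then obtain a v b where hv: "pd [a] v" "w = v @ [b]" "matches a b"
    using ne by (cases rule: pd.cases) auto
  obtain u v' where uv: "v = u @ a # v'" "pd [] u" "pd [] v'" using decomp[of "[]" a v] hv(1) by auto
  have sw: "set w \<subseteq> Sigma1 M" using wD by (simp add: Dy_def)
  have uD: "u \<in> Dy M" using uv sw hv pd_run[OF uv(2), of "[]"] by (auto simp: Dy_def red_def)
  have vD: "v' \<in> Dy M" using uv sw hv pd_run[OF uv(3), of "[]"] by (auto simp: Dy_def red_def)
  have aS: "a \<in> Sigma1 M" "b \<in> Sigma1 M" using sw hv uv by auto
  have "(a, b) \<in> Pairs M" using hv(3) aS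
    by (cases a; cases b) (auto simp: Pairs_def Sigma1_def)
  then have "a # v' @ [b] \<in> Ef M" using vD unfolding Ef_def by blast
  then show ?thesis using uD hv uv by auto
qed

lemma unique_aux: "u \<in> Dy M \<Longrightarrow> e \<in> Ef M \<Longrightarrow> u' \<in> Dy M \<Longrightarrow> e' \<in> Ef M \<Longrightarrow>
   u' = u @ x \<Longrightarrow> e = x @ e' \<Longrightarrow> x = []"
proof (rule ccontr)
  assume h: "u \<in> Dy M" "e \<in> Ef M" "u' \<in> Dy M" "e' \<in> Ef M" "u' = u @ x" "e = x @ e'" "x \<noteq> []"
  have "red u' = foldl step (red u) x" using h(5) by (simp add: red_def)
  then have "red x = Some []" using h(1,3) by (simp add: Dy_def red_def)
  moreover have "e' \<noteq> []" using h(4) by (auto simp: Ef_def)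
  ultimately show False using Ef_prime[OF h(2) h(6) h(7)] by simp
qed

lemma unique: "u \<in> Dy M \<Longrightarrow> e \<in> Ef M \<Longrightarrow> u' \<in> Dy M \<Longrightarrow> e' \<in> Ef M \<Longrightarrow>
   u @ e = u' @ e' \<Longrightarrow> u = u' \<and> e = e'"
proof -
  assume h: "u \<in> Dy M" "e \<in> Ef M" "u' \<in> Dy M" "e' \<in> Ef M" "u @ e = u' @ e'"
  then obtain us where "(u = u' @ us \<and> us @ e = e') \<or> (u @ us = u' \<and> e = us @ e')"
    by (auto simp: append_eq_append_conv2)
  then show ?thesis
  proof
    assume a: "u = u' @ us \<and> us @ e = e'"
    then have "us = []" using unique_aux[OF h(3,4,1,2)] by blast
    then show ?thesis using a by simp
  next
    assume a: "u @ us = u' \<and> e = us @ e'"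
    then have "us = []" using unique_aux[OF h(1,2,3,4)] by blast
    then show ?thesis using a by simp
  qed
qed



lemma red_app_dyck: "red u = Some [] \<Longrightarrow> red (u @ v) = red v"
  by (simp add: red_def)

lemma red_rep: "red w = Some [] \<Longrightarrow> red (concat (replicate K w)) = Some []"
  by (induction K) (auto simp: red_app_dyck, simp add: red_def)

lemma upto_map: "[i..i + int L - 1] = map (\<lambda>k. i + int k) [0..<L]"
proof (induction L)
  case 0 then show ?case by simp
next
  case (Suc L)
  have "[i..i + int (Suc L) - 1] = [i..i + int L - 1] @ [i + int L]"
    using upto_rec2[of i "i + int L"] by simp
  then show ?case using Suc by simp
qed

lemma periodic:
  fixes w :: "letter list"
  assumes ne: "w \<noteq> []"
  defines "x \<equiv> (\<lambda>i::int. w ! nat (i mod int (length w)))"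
  shows "\<exists>K. take (nat (i mod int (length w))) w @ map (\<lambda>k. x (i + int k)) [0..<L]
            @ drop (nat ((i + int L) mod int (length w))) w = concat (replicate K w)"
proof (induction L)
  case 0
  have "take (nat (i mod int (length w))) w @ drop (nat (i mod int (length w))) w = concat (replicate 1 w)"
    by simp
  then show ?case by (intro exI[of _ 1]) simp
next
  case (Suc L)
  define n where "n = length w"
  have npos: "n > 0" using ne n_def by simp
  define r where "r = nat ((i + int L) mod int n)"
  have rlt: "r < n" using npos unfolding r_def by (simp add: nat_less_iff)
  obtain K where K: "take (nat (i mod int n)) w @ map (\<lambda>k. x (i + int k)) [0..<L] @ drop r w
      = concat (replicate K w)" using Suc r_def n_def by auto
  have dr: "drop r w = w ! r # drop (Suc r) w" using rlt n_def by (simp add: Cons_nth_drop_Suc)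
  have xr: "x (i + int L) = w ! r" unfolding x_def r_def n_def by simp
  have mapS: "map (\<lambda>k. x (i + int k)) [0..<Suc L] = map (\<lambda>k. x (i + int k)) [0..<L] @ [w ! r]"
    using xr by simp
  show ?case
  proof (cases "Suc r < n")
    case True
    have "(i + int (Suc L)) mod int n = (i + int L) mod int n + 1"
    proof -
      have e: "i + int (Suc L) = (i + int L) + 1" by simp
      have "(i + int (Suc L)) mod int n = ((i + int L) mod int n + 1) mod int n"
        unfolding e by (simp only: mod_add_left_eq)
      also have "\<dots> = (i + int L) mod int n + 1"
        using True r_def npos by (intro mod_pos_pos_trivial) auto
      finally show ?thesis .
    qed
    then have "nat ((i + int (Suc L)) mod int n) = Suc r"
      using r_def npos by (simp add: nat_add_distrib)
    then show ?thesis using K dr mapS n_def by auto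
  next
    case False
    then have sr: "Suc r = n" using rlt by simp
    have "(i + int (Suc L)) mod int n = 0"
    proof -
      have e: "i + int (Suc L) = (i + int L) + 1" by simp
      have m0: "0 \<le> (i + int L) mod int n" using npos by simp
      have ir: "int r = (i + int L) mod int n" using m0 r_def by simp
      have "(i + int (Suc L)) mod int n = ((i + int L) mod int n + 1) mod int n"
        unfolding e by (simp only: mod_add_left_eq)
      also have "(i + int L) mod int n + 1 = int n" using sr ir by linarith
      finally show ?thesis by simp
    qed
    then have "take (nat (i mod int n)) w @ map (\<lambda>k. x (i + int k)) [0..<Suc L]
        @ drop (nat ((i + int (Suc L)) mod int n)) w = concat (replicate (Suc K) w)"
      using K dr mapS sr n_def by (simp add: replicate_append_same[symmetric])
    then show ?thesis using n_def by blast
  qed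
qed

lemma dyck_block:
  assumes ne: "w \<noteq> []" and rw: "red w = Some []" and sw: "set w \<subseteq> Sigma1 M"
  shows "w \<in> blocks M"
proof -
  define x where "x = (\<lambda>i::int. w ! nat (i mod int (length w)))"
  have xS: "\<forall>i. x i \<in> Sigma1 M"
  proof
    fix i
    have "nat (i mod int (length w)) < length w" using ne by (simp add: nat_less_iff)
    then show "x i \<in> Sigma1 M" using sw unfolding x_def by (meson nth_mem subsetD)
  qed
  have xnz: "\<forall>i j. i \<le> j \<longrightarrow> red (map x [i..j]) \<noteq> None"
  proof (intro allI impI)
    fix i j :: int assume "i \<le> j"
    define L where "L = nat (j - i + 1)"
    have "j = i + int L - 1" using \<open>i \<le> j\<close> L_def by simp
    then have seg: "map x [i..j] = map (\<lambda>k. x (i + int k)) [0..<L]" by (simp add: upto_map)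
    obtain K where K: "take (nat (i mod int (length w))) w @ map (\<lambda>k. x (i + int k)) [0..<L]
            @ drop (nat ((i + int L) mod int (length w))) w = concat (replicate K w)"
      using periodic[OF ne, of i L] unfolding x_def by blast
    show "red (map x [i..j]) \<noteq> None"
    proof
      assume "red (map x [i..j]) = None"
      then have "red (concat (replicate K w)) = None" using factor_None seg K by metis
      then show False using red_rep[OF rw] by simp
    qed
  qed
  have "x \<in> XM M" unfolding XM_def using xS xnz by blast
  moreover have "w = map (\<lambda>k. x (0 + int k)) [0..<length w]"
    by (rule nth_equalityI) (auto simp: x_def)
  ultimately show ?thesis unfolding blocks_def by blast
qed

lemma blocks_set: "w \<in> blocks M \<Longrightarrow> set w \<subseteq> Sigma1 M"
proof
  fix c assume "w \<in> blocks M" "c \<in> set w"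
  then obtain xa i where "xa \<in> XM M" "w = map (\<lambda>k. xa (i + int k)) [0..<length w]"
    unfolding blocks_def by blast
  moreover have "c \<in> set (map (\<lambda>k. xa (i + int k)) [0..<length w])"
    using \<open>c \<in> set w\<close> calculation(2) by simp
  then obtain k where "c = xa (i + int k)" by auto
  ultimately show "c \<in> Sigma1 M" by (simp add: XM_def)
qed

lemma codeE_Ef: "codeE M = Ef M"
proof
  show "codeE M \<subseteq> Ef M"
  proof
    fix w assume "w \<in> codeE M"
    then obtain a v b where h: "w \<in> blocks M" "w = a # v @ [b]" "a \<in> {Lam, Xi}"
      "b \<in> Rho ` {1..M} \<union> Eta ` {1..M}" "red [a, b] = Some []" "red v = Some []"
      unfolding codeE_def by blast
    have "(a, b) \<in> Pairs M" using h(3,4,5) by (auto simp: Pairs_def red_def)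
    moreover have "v \<in> Dy M" using blocks_set[OF h(1)] h(2,6) by (auto simp: Dy_def)
    ultimately show "w \<in> Ef M" using h(2) unfolding Ef_def by blast
  qed
next
  show "Ef M \<subseteq> codeE M"
  proof
    fix w assume wE: "w \<in> Ef M"
    then obtain a b v where w: "w = a # v @ [b]" "(a, b) \<in> Pairs M" "v \<in> Dy M"
      unfolding Ef_def by blast
    have "w \<in> blocks M" using Ef_red[OF wE] w(1) dyck_block by blast
    moreover have "a \<in> {Lam, Xi}" "b \<in> Rho ` {1..M} \<union> Eta ` {1..M}" "red [a, b] = Some []"
      using w(2) by (auto simp: Pairs_def red_def)
    moreover have "red v = Some []" using w(3) by (simp add: Dy_def)
    ultimately show "w \<in> codeE M" unfolding codeE_def using w(1) by blast
  qed
qed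



definition Dn :: "nat \<Rightarrow> nat \<Rightarrow> letter list set" where
  "Dn M n = {v \<in> Dy M. length v = n}"
definition En :: "nat \<Rightarrow> nat \<Rightarrow> letter list set" where
  "En M n = {v \<in> Ef M. length v = n}"

lemma finite_Sigma1: "finite (Sigma1 M)"
  by (simp add: Sigma1_def)

lemma finite_Dn: "finite (Dn M n)"
  by (rule finite_subset[OF _ finite_lists_length_eq[OF finite_Sigma1, of M n]])
     (auto simp: Dn_def Dy_def)

lemma finite_En: "finite (En M n)"
  by (rule finite_subset[OF _ finite_lists_length_eq[OF finite_Sigma1, of M n]])
     (use Ef_red in \<open>auto simp: En_def\<close>)

lemma card_Pairs: "card (Pairs M) = 2 * M"
proof -
  have "card (Pairs M) = card ((\<lambda>i. (Lam, Rho i)) ` {1..M}) + card ((\<lambda>i. (Xi, Eta i)) ` {1..M})"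
    unfolding Pairs_def by (rule card_Un_disjoint) auto
  also have "\<dots> = M + M"
    by (subst card_image, simp add: inj_on_def)+ simp
  finally show ?thesis by simp
qed

lemma finite_Pairs: "finite (Pairs M)"
  by (simp add: Pairs_def)

lemma En_SS: "En M (Suc (Suc n)) = (\<lambda>((a, b), v). a # v @ [b]) ` (Pairs M \<times> Dn M n)"
  unfolding En_def Dn_def Ef_def by (auto intro!: image_eqI)

lemma card_En_SS: "card (En M (Suc (Suc n))) = 2 * M * card (Dn M n)"
proof -
  have "inj_on (\<lambda>((a, b), v). a # v @ [b]) (Pairs M \<times> Dn M n)"
    by (auto simp: inj_on_def)
  then have "card (En M (Suc (Suc n))) = card (Pairs M \<times> Dn M n)"
    unfolding En_SS by (rule card_image)
  then show ?thesis by (simp add: card_cartesian_product card_Pairs)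
qed

lemma En_0: "En M 0 = {}" and En_1: "En M (Suc 0) = {}"
  by (auto simp: En_def Ef_def)

lemma Dn_0: "Dn M 0 = {[]}"
  by (auto simp: Dn_def Dy_def red_def)

lemma Dn_rec:
  assumes "m > 0"
  shows "Dn M m = (\<lambda>(u, e). u @ e) ` (\<Union>k\<in>{..m}. Dn M k \<times> En M (m - k))"
proof
  show "Dn M m \<subseteq> (\<lambda>(u, e). u @ e) ` (\<Union>k\<in>{..m}. Dn M k \<times> En M (m - k))"
  proof
    fix w assume "w \<in> Dn M m"
    then have w: "w \<in> Dy M" "length w = m" by (auto simp: Dn_def)
    then have "w \<noteq> []" using assms by auto
    then obtain u e where ue: "w = u @ e" "u \<in> Dy M" "e \<in> Ef M" using last_return w(1) by blast
    then have "(u, e) \<in> Dn M (length u) \<times> En M (m - length u)" using w(2)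
      by (auto simp: Dn_def En_def)
    moreover have "length u \<in> {..m}" using w(2) ue by auto
    ultimately show "w \<in> (\<lambda>(u, e). u @ e) ` (\<Union>k\<in>{..m}. Dn M k \<times> En M (m - k))"
      using ue(1) by force
  qed
next
  show "(\<lambda>(u, e). u @ e) ` (\<Union>k\<in>{..m}. Dn M k \<times> En M (m - k)) \<subseteq> Dn M m"
  proof
    fix w assume "w \<in> (\<lambda>(u, e). u @ e) ` (\<Union>k\<in>{..m}. Dn M k \<times> En M (m - k))"
    then obtain k u e where h: "k \<le> m" "u \<in> Dn M k" "e \<in> En M (m - k)" "w = u @ e" by auto
    have "red w = Some []" using h Ef_red[of e M] red_app_dyck[of u e]
      by (auto simp: Dn_def En_def Dy_def)
    moreover have "set w \<subseteq> Sigma1 M" using h Ef_red[of e M] by (auto simp: Dn_def En_def Dy_def)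
    moreover have "length w = m" using h by (auto simp: Dn_def En_def)
    ultimately show "w \<in> Dn M m" by (simp add: Dn_def Dy_def)
  qed
qed

lemma card_Dn_rec:
  assumes "m > 0"
  shows "card (Dn M m) = (\<Sum>k\<le>m. card (Dn M k) * card (En M (m - k)))"
proof -
  let ?S = "\<Union>k\<in>{..m}. Dn M k \<times> En M (m - k)"
  have inj: "inj_on (\<lambda>(u, e). u @ e) ?S"
  proof (rule inj_onI, clarify)
    fix k u e k' u' e'
    assume "u \<in> Dn M k" "e \<in> En M (m - k)" "u' \<in> Dn M k'" "e' \<in> En M (m - k')" "u @ e = u' @ e'"
    then show "u = u' \<and> e = e'" using unique[of u M e u' e'] by (auto simp: Dn_def En_def)
  qed
  have "card (Dn M m) = card ?S" unfolding Dn_rec[OF assms] using inj by (rule card_image)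
  also have "\<dots> = (\<Sum>k\<le>m. card (Dn M k \<times> En M (m - k)))"
    apply (rule card_UN_disjoint)
      apply simp
     apply (simp add: finite_Dn finite_En)
    apply (auto simp: Dn_def)
    done
  also have "\<dots> = (\<Sum>k\<le>m. card (Dn M k) * card (En M (m - k)))"
    by (simp add: card_cartesian_product)
  finally show ?thesis .
qed



theorem lemma3p2:
  fixes M :: nat
  shows "genfun (codeE M) =
    fps_const (1/2) * (1 - fps_radical (\<lambda>_ _. 1) 2 (1 - fps_const (8 * real M) * fps_X ^ 2))"
proof -
  define G :: "real fps" where "G = Abs_fps (\<lambda>n. real (card (En M n)))"
  define D :: "real fps" where "D = Abs_fps (\<lambda>n. real (card (Dn M n)))"
  define C :: "real fps" where "C = fps_const (2 * real M)"
  have gen: "genfun (codeE M) = G"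
    unfolding genfun_def G_def En_def codeE_Ef by simp
  have h1: "G = C * (fps_X ^ 2 * D)"
  proof (rule fps_ext)
    fix n
    show "fps_nth G n = fps_nth (C * (fps_X ^ 2 * D)) n"
    proof (cases n)
      case 0 then show ?thesis by (simp add: G_def C_def fps_X_power_mult_nth En_0)
    next
      case (Suc n')
      then show ?thesis
        by (cases n') (simp_all add: G_def C_def D_def fps_X_power_mult_nth En_0 En_1 card_En_SS)
    qed
  qed
  have h2: "D = 1 + D * G"
  proof (rule fps_ext)
    fix n
    show "fps_nth D n = fps_nth (1 + D * G) n"
    proof (cases "n = 0")
      case True then show ?thesis by (simp add: D_def G_def fps_mult_nth Dn_0 En_0)
    next
      case False
      have "fps_nth D n = real (\<Sum>k\<le>n. card (Dn M k) * card (En M (n - k)))"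
        using card_Dn_rec[of n M] False by (simp add: D_def)
      also have "\<dots> = fps_nth (D * G) n"
        by (simp add: fps_mult_nth D_def G_def atLeast0AtMost)
      finally show ?thesis using False by simp
    qed
  qed
  have h3: "G * G = G - C * fps_X ^ 2"
  proof -
    have "G = C * fps_X ^ 2 * (1 + D * G)" using h1 h2 by (metis mult.assoc)
    also have "\<dots> = C * fps_X ^ 2 + (C * (fps_X ^ 2 * D)) * G" by (simp add: algebra_simps)
    also have "\<dots> = C * fps_X ^ 2 + G * G" using h1 by simp
    finally show ?thesis by (simp add: algebra_simps)
  qed
  define A where "A = 1 - 2 * G"
  have A0: "fps_nth A 0 = 1" by (simp add: A_def G_def En_0)
  have c8: "fps_const (8 * real M) = 4 * C"
  proof -
    have "4 * C = fps_const 4 * fps_const (2 * real M)"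
      unfolding C_def by (simp only: fps_numeral_fps_const)
    also have "\<dots> = fps_const (4 * (2 * real M))" by (rule fps_const_mult)
    also have "\<dots> = fps_const (8 * real M)" by simp
    finally show ?thesis by simp
  qed
  have "A ^ 2 = 1 - 4 * G + 4 * (G * G)" by (simp add: A_def power2_eq_square algebra_simps)
  also have "\<dots> = 1 - 4 * G + 4 * (G - C * fps_X ^ 2)" by (simp only: h3)
  also have "\<dots> = 1 - (4 * C) * fps_X ^ 2" by (simp add: algebra_simps)
  also have "\<dots> = 1 - fps_const (8 * real M) * fps_X ^ 2" by (simp only: c8)
  finally have A2: "A ^ Suc 1 = 1 - fps_const (8 * real M) * fps_X ^ 2" by (simp add: power2_eq_square)
  have "A = fps_radical (\<lambda>_ _. 1) (Suc 1) (1 - fps_const (8 * real M) * fps_X ^ 2)"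
    using radical_unique[where r = "\<lambda>_ _. 1" and k = 1 and a = A
        and b = "1 - fps_const (8 * real M) * fps_X ^ 2"] A0 A2 by simp
  then have rad: "fps_radical (\<lambda>_ _. 1) 2 (1 - fps_const (8 * real M) * fps_X ^ 2) = A" by (simp add: numeral_2_eq_2)
  have "fps_const (1/2) * (1 - A) = fps_const (1/2) * (fps_const 2 * G)"
    by (simp add: A_def fps_numeral_fps_const)
  also have "\<dots> = (fps_const (1/2) * fps_const 2) * G" by (simp only: mult.assoc)
  also have "fps_const (1/2) * fps_const 2 = (1 :: real fps)" by (simp only: fps_const_mult) simp
  also have "1 * G = G" by simp
  finally show ?thesis using gen rad by simp
qed

end
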